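(* Every Stackelberg game $(G,L,F)$ admits an SCE and an SCE-PA, i.e. $\mathbf{X}^{SCE}\neq\emptyset$ and $\mathbf{X}^{SCE\text{-}PA}\neq\emptyset$.
   Context: A finite game is $G=(N,\{S_p\}_{p\in N},\{u_p\}_{p\in N})$ with players $N=\{1,\dots,n\}$, finite nonempty strategy sets $S_p$, and utilities $u_p:S\to\mathbb{R}$ on $S=\prod_{p\in N}S_p$; write $s=(s_p,s_{-p})$ with $s_{-p}\in S_{-p}=\prod_{q\neq p}S_q$. $\mathcal{X}=\Delta(S)$ is the set of probability distributions on $S$ and $u_p(x)=\sum_{s\in S}x(s)u_p(s)$ for $x\in\mathcal{X}$. For $P\subseteq N$, $\mathcal{X}^{CE}_P$ is the set of $x\in\mathcal{X}$ such that for every $p\in P$ and all $s_p\neq s_p'\in S_p$: $\sum_{s_{-p}\in S_{-p}} x(s_p,s_{-p})\,(u_p(s_p,s_{-p})-u_p(s_p',s_{-p}))\ge 0$; $\mathcal{X}^{CE}=\mathcal{X}^{CE}_N$ is the set of correlated equilibria of $G$. A Stackelberg game (SG) is a triple $(G,L,F)$ with $L\cup F=N$ and $L\cap F=\emptyset$ (leaders and followers). For $P\subseteq N$, $\Pi_P$ is the set of ordered subsets of $P$ (finite sequences of pairwise distinct elements of $P$, including the empty sequence $\varnothing$); for $\pi\in\Pi_P$ and $p\in P$ not occurring in $\pi$, $\pi p$ is $\pi$ with $p$ appended; when used as a set, $\pi$ means its set of entries. $\mathbf{X}=\prod_{\pi\in\Pi_L}\mathcal{X}^{CE}_{\pi\cup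 F}$, with elements $\mathbf{x}=[x_\pi]_{\pi\in\Pi_L}$. For $\mathbf{x}\in\mathbf{X}$ and $\pi\in\Pi_L$, $x_\pi$ is stable if $u_p(x_\pi)\ge u_p(x_{\pi p})$ for all $p\in L\setminus\pi$; $\mathbf{x}$ is stable if $x_\varnothing$ is stable, and perfectly stable if $x_\pi$ is stable for every $\pi\in\Pi_L$; $\mathbf{X}^{S}$ and $\mathbf{X}^{PS}$ denote the sets of stable and perfectly stable elements of $\mathbf{X}$. For $\mathbf{X}'\subseteq\mathbf{X}$ and $\pi\in\Pi_L$, $\mathcal{P}_{L\setminus\pi}(\mathbf{X}')$ is the set of Pareto optimal elements of $\{x'_\pi:\mathbf{x}'\in\mathbf{X}'\}$ with respect to the objectives $u_p$, $p\in L\setminus\pi$ (an element $y$ of the set is Pareto optimal if no $y'$ in the set satisfies $u_p(y')\ge u_p(y)$ for all $p\in L\setminus\pi$ with strict inequality for some such $p$). $\mathbf{x}\in\mathbf{X}$ is an SCE if $\mathbf{x}\in\mathbf{X}^S$ and $x_\varnothing\in\mathcal{P}_L(\mathbf{X}^S)$; an SCE-PA if $\mathbf{x}\in\mathbf{X}^{PS}$ and $x_\varnothing\in\mathcal{P}_L(\mathbf{X}^{PS})$; an SCE-PAPE if $\mathbf{x}\in\mathbf{X}^{PS}$ and $x_\pi\in\mathcal{P}_{L\setminus\pi}(\mathbf{X}^{PS})$ for every $\pi\in\Pi_L$. The corresponding sets are $\mathbf{X}^{SCE}$, $\mathbf{X}^{SCE\text{-}PA}$, $\mathbf{X}^{SCE\text{-}PAPE}$.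 *)

theory Defs
  imports "HOL-Analysis.Analysis"
begin

definition profiles :: "'p set \<Rightarrow> ('p \<Rightarrow> 's set) \<Rightarrow> ('p \<Rightarrow> 's) set" where
  "profiles N S = Pi\<^sub>E N S"

definition finite_game :: "'p set \<Rightarrow> ('p \<Rightarrow> 's set) \<Rightarrow> bool" where
  "finite_game N S \<longleftrightarrow> finite N \<and> (\<forall>p\<in>N. finite (S p) \<and> S p \<noteq> {})"

definition distributions :: "'p set \<Rightarrow> ('p \<Rightarrow> 's set) \<Rightarrow> (('p \<Rightarrow> 's) \<Rightarrow> real) set" where
  "distributions N S = {x. (\<forall>s\<in>profiles N S. 0 \<le> x s) \<and> (\<forall>s. s \<notin> profiles N S \<longrightarrow> x s = 0)
                          \<and> (\<Sum>s\<in>profiles N S. x s) = 1}"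

definition exp_util ::
  "'p set \<Rightarrow> ('p \<Rightarrow> 's set) \<Rightarrow> ('p \<Rightarrow> ('p \<Rightarrow> 's) \<Rightarrow> real) \<Rightarrow> 'p \<Rightarrow> (('p \<Rightarrow> 's) \<Rightarrow> real) \<Rightarrow> real" where
  "exp_util N S u p x = (\<Sum>s\<in>profiles N S. x s * u p s)"

text \<open>X^CE_P: distributions satisfying the correlated-equilibrium constraints of all players in P.
The sum over s_{-p} in S_{-p} of x(s_p,s_{-p}) is written as the sum over pure profiles s with s p = s_p.\<close>
definition CE_set ::
  "'p set \<Rightarrow> ('p \<Rightarrow> 's set) \<Rightarrow> ('p \<Rightarrow> ('p \<Rightarrow> 's) \<Rightarrow> real) \<Rightarrow> 'p set \<Rightarrow> (('p \<Rightarrow> 's) \<Rightarrow> real) set" where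
  "CE_set N S u P = {x \<in> distributions N S.
      \<forall>p\<in>P. \<forall>a\<in>S p. \<forall>b\<in>S p. a \<noteq> b \<longrightarrow>
        (\<Sum>s\<in>{s\<in>profiles N S. s p = a}. x s * (u p s - u p (s(p := b)))) \<ge> 0}"

text \<open>Ordered subsets of P: lists of pairwise distinct elements of P (including []).
For a list \<pi> and p, \<pi> p is \<pi> @ [p].\<close>
definition ordered_subsets :: "'p set \<Rightarrow> 'p list set" where
  "ordered_subsets P = {\<pi>. distinct \<pi> \<and> set \<pi> \<subseteq> P}"

definition SG_X ::
  "'p set \<Rightarrow> ('p \<Rightarrow> 's set) \<Rightarrow> ('p \<Rightarrow> ('p \<Rightarrow> 's) \<Rightarrow> real) \<Rightarrow> 'p set \<Rightarrow> 'p set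
   \<Rightarrow> ('p list \<Rightarrow> (('p \<Rightarrow> 's) \<Rightarrow> real)) set" where
  "SG_X N S u L F = (\<Pi>\<^sub>E \<pi>\<in>ordered_subsets L. CE_set N S u (set \<pi> \<union> F))"

definition stable_at ::
  "'p set \<Rightarrow> ('p \<Rightarrow> 's set) \<Rightarrow> ('p \<Rightarrow> ('p \<Rightarrow> 's) \<Rightarrow> real) \<Rightarrow> 'p set
   \<Rightarrow> ('p list \<Rightarrow> (('p \<Rightarrow> 's) \<Rightarrow> real)) \<Rightarrow> 'p list \<Rightarrow> bool" where
  "stable_at N S u L x \<pi> \<longleftrightarrow>
     (\<forall>p\<in>L - set \<pi>. exp_util N S u p (x \<pi>) \<ge> exp_util N S u p (x (\<pi> @ [p])))"

definition SG_XS ::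
  "'p set \<Rightarrow> ('p \<Rightarrow> 's set) \<Rightarrow> ('p \<Rightarrow> ('p \<Rightarrow> 's) \<Rightarrow> real) \<Rightarrow> 'p set \<Rightarrow> 'p set
   \<Rightarrow> ('p list \<Rightarrow> (('p \<Rightarrow> 's) \<Rightarrow> real)) set" where
  "SG_XS N S u L F = {x \<in> SG_X N S u L F. stable_at N S u L x []}"

definition SG_XPS ::
  "'p set \<Rightarrow> ('p \<Rightarrow> 's set) \<Rightarrow> ('p \<Rightarrow> ('p \<Rightarrow> 's) \<Rightarrow> real) \<Rightarrow> 'p set \<Rightarrow> 'p set
   \<Rightarrow> ('p list \<Rightarrow> (('p \<Rightarrow> 's) \<Rightarrow> real)) set" where
  "SG_XPS N S u L F = {x \<in> SG_X N S u L F. \<forall>\<pi>\<in>ordered_subsets L. stable_at N S u L x \<pi>}"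

definition pareto ::
  "'p set \<Rightarrow> ('p \<Rightarrow> 's set) \<Rightarrow> ('p \<Rightarrow> ('p \<Rightarrow> 's) \<Rightarrow> real) \<Rightarrow> 'p set \<Rightarrow> 'p list
   \<Rightarrow> ('p list \<Rightarrow> (('p \<Rightarrow> 's) \<Rightarrow> real)) set \<Rightarrow> (('p \<Rightarrow> 's) \<Rightarrow> real) set" where
  "pareto N S u L \<pi> X' =
     {y \<in> (\<lambda>x'. x' \<pi>) ` X'. \<not> (\<exists>y'\<in>(\<lambda>x'. x' \<pi>) ` X'.
        (\<forall>p\<in>L - set \<pi>. exp_util N S u p y' \<ge> exp_util N S u p y) \<and>
        (\<exists>p\<in>L - set \<pi>. exp_util N S u p y' > exp_util N S u p y))}"

definition SCE_set ::
  "'p set \<Rightarrow> ('p \<Rightarrow> 's set) \<Rightarrow> ('p \<Rightarrow> ('p \<Rightarrow> 's) \<Rightarrow> real) \<Rightarrow> 'p set \<Rightarrow> 'p set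
   \<Rightarrow> ('p list \<Rightarrow> (('p \<Rightarrow> 's) \<Rightarrow> real)) set" where
  "SCE_set N S u L F = {x \<in> SG_XS N S u L F. x [] \<in> pareto N S u L [] (SG_XS N S u L F)}"

definition SCE_PA_set ::
  "'p set \<Rightarrow> ('p \<Rightarrow> 's set) \<Rightarrow> ('p \<Rightarrow> ('p \<Rightarrow> 's) \<Rightarrow> real) \<Rightarrow> 'p set \<Rightarrow> 'p set
   \<Rightarrow> ('p list \<Rightarrow> (('p \<Rightarrow> 's) \<Rightarrow> real)) set" where
  "SCE_PA_set N S u L F = {x \<in> SG_XPS N S u L F. x [] \<in> pareto N S u L [] (SG_XPS N S u L F)}"

end

theory Submission
  imports Defs
begin

lemma compact_box:
  fixes K :: "'i \<Rightarrow> 'b::topological_space set"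
  assumes "\<And>i. compact (K i)"
  shows "compact {x. \<forall>i. x i \<in> K i}"
proof -
  have "compactin (product_topology (\<lambda>_. euclidean) UNIV) (PiE UNIV K)"
    using assms by (simp add: compactin_PiE)
  then have "compact (PiE UNIV K)"
    by (simp add: euclidean_product_topology)
  moreover have "PiE UNIV K = {x. \<forall>i. x i \<in> K i}" by (auto simp: PiE_def Pi_def)
  ultimately show ?thesis by (simp add: closed_INT)
qed

lemma closed_ball_cond:
  fixes g :: "'i \<Rightarrow> 'a::topological_space \<Rightarrow> real"
  assumes "\<And>i. continuous_on UNIV (g i)"
  shows "closed {x. \<forall>i\<in>J. 0 \<le> g i x}"
proof -
  have "{x. \<forall>i\<in>J. 0 \<le> g i x} = (\<Inter>i\<in>J. {x. 0 \<le> g i x})" by auto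
  moreover have "closed {x. 0 \<le> g i x}" for i
    by (rule closed_Collect_le) (auto intro: assms continuous_on_const)
  ultimately show ?thesis by (simp add: closed_INT)
qed

lemma closed_ball_eq:
  fixes g h :: "'i \<Rightarrow> 'a::topological_space \<Rightarrow> real"
  assumes "\<And>i. continuous_on UNIV (g i)" "\<And>i. continuous_on UNIV (h i)"
  shows "closed {x. \<forall>i\<in>J. g i x = h i x}"
proof -
  have "{x. \<forall>i\<in>J. g i x = h i x} = (\<Inter>i\<in>J. {x. g i x = h i x})" by auto
  moreover have "closed {x. g i x = h i x}" for i
    by (rule closed_Collect_eq) (auto intro: assms)
  ultimately show ?thesis by (simp add: closed_INT)
qed

definition smplx :: "'t set \<Rightarrow> ('t \<Rightarrow> real) set" where
  "smplx T = {q. (\<forall>t\<in>T. 0 \<le> q t) \<and> (\<forall>t. t \<notin> T \<longrightarrow> q t = 0) \<and> sum q T = 1}"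

lemma smplx_le1: "finite T \<Longrightarrow> q \<in> smplx T \<Longrightarrow> t \<in> T \<Longrightarrow> q t \<le> 1"
  unfolding smplx_def using member_le_sum[of t T q] by auto

lemma compact_smplx:
  fixes T :: "'t set"
  assumes "finite T"
  shows "compact (smplx T)"
proof -
  define K where "K t = (if t \<in> T then {0..1} else {0::real})" for t
  have "smplx T = {x. \<forall>i. x i \<in> K i} \<inter> {x. \<forall>i\<in>T. 0 \<le> x i} \<inter> {x. \<forall>i\<in>{()}. sum x T = 1}"
  proof (intro set_eqI iffI)
    fix x assume x: "x \<in> smplx T"
    then show "x \<in> {x. \<forall>i. x i \<in> K i} \<inter> {x. \<forall>i\<in>T. 0 \<le> x i} \<inter> {x. \<forall>i\<in>{()}. sum x T = 1}"
      using smplx_le1[OF assms x] unfolding K_def smplx_def by auto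
  next
    fix x assume "x \<in> {x. \<forall>i. x i \<in> K i} \<inter> {x. \<forall>i\<in>T. 0 \<le> x i} \<inter> {x. \<forall>i\<in>{()}. sum x T = 1}"
    then have a: "\<And>i. x i \<in> K i" and b: "\<forall>i\<in>T. 0 \<le> x i" and c: "sum x T = 1" by auto
    have "x t = 0" if "t \<notin> T" for t using a[of t] that by (simp add: K_def)
    then show "x \<in> smplx T" using b c unfolding smplx_def by blast
  qed
  moreover have "compact {x. \<forall>i. x i \<in> K i}" by (rule compact_box) (auto simp: K_def)
  moreover have "closed {x::'t\<Rightarrow>real. \<forall>i\<in>T. 0 \<le> x i}"
    by (rule closed_ball_cond) simp
  moreover have "closed {x::'t\<Rightarrow>real. \<forall>i\<in>{()}. sum x T = 1}"
    using closed_ball_eq[where g="\<lambda>_ x. sum x T" and h="\<lambda>_ _. 1" and J="{()}"]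
    by (simp add: continuous_on_sum continuous_on_const)
  ultimately show ?thesis by (simp add: compact_Int_closed)
qed


definition ng :: "real \<Rightarrow> real" where "ng v = max 0 (- v)"

lemma ng_sq_le: "(ng (v + x))\<^sup>2 \<le> (ng v - x)\<^sup>2"
proof (cases "v + x \<ge> 0")
  case True then show ?thesis by (simp add: ng_def)
next
  case False
  then have "ng (v + x) = - v - x" by (simp add: ng_def)
  moreover have "- v - x \<le> ng v - x" by (simp add: ng_def)
  moreover have "0 \<le> - v - x" using False by simp
  ultimately show ?thesis by (simp add: power_mono)
qed

lemma ng_mult: "ng v * v = - (ng v)\<^sup>2"
  by (simp add: ng_def power2_eq_square max_def)

lemma small_tau:
  fixes a b :: real
  assumes "\<And>\<tau>. 0 < \<tau> \<Longrightarrow> \<tau> \<le> 1 \<Longrightarrow> 2 * \<tau> * a \<le> \<tau>\<^sup>2 * b"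
  shows "a \<le> 0"
proof (rule ccontr)
  assume "\<not> a \<le> 0"
  then have a: "a > 0" by simp
  have "2 * a \<le> b" using assms[of 1] by simp
  then have b: "b > 0" using a by simp
  define \<tau> where "\<tau> = a / b"
  have "\<tau> > 0" using a b by (simp add: \<tau>_def)
  moreover have "\<tau> \<le> 1" using a b \<open>2 * a \<le> b\<close> by (simp add: \<tau>_def)
  ultimately have "2 * \<tau> * a \<le> \<tau>\<^sup>2 * b" by (rule assms)
  then have "2 * a \<le> \<tau> * b" using \<open>\<tau> > 0\<close> by (simp add: power2_eq_square)
  also have "\<tau> * b = a" using b by (simp add: \<tau>_def)
  finally show False using a by simp
qed

lemma ville:
  fixes T :: "'t set" and I :: "'i set" and A :: "'i \<Rightarrow> 't \<Rightarrow> real"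
  assumes T: "finite T" "T \<noteq> {}" and I: "finite I"
  shows "(\<exists>q\<in>smplx T. \<forall>i\<in>I. 0 \<le> (\<Sum>t\<in>T. A i t * q t))
       \<or> (\<exists>w. (\<forall>i\<in>I. 0 \<le> w i) \<and> (\<forall>t\<in>T. (\<Sum>i\<in>I. w i * A i t) < 0))"
proof -
  define f where "f q = (\<Sum>i\<in>I. (ng (\<Sum>t\<in>T. A i t * q t))\<^sup>2)" for q :: "'t \<Rightarrow> real"
  have cont: "continuous_on UNIV f" unfolding f_def ng_def
    by (intro continuous_intros continuous_on_product_coordinates)
  obtain t0 where t0: "t0 \<in> T" using T by blast
  have "(\<lambda>t. if t = t0 then 1 else 0) \<in> smplx T"
    using t0 T by (simp add: smplx_def)
  then have ne: "smplx T \<noteq> {}" by blast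
  obtain qs where qs: "qs \<in> smplx T" and qmin: "\<And>q. q \<in> smplx T \<Longrightarrow> f qs \<le> f q"
    using continuous_attains_inf[OF compact_smplx[OF T(1)] ne continuous_on_subset[OF cont]] by blast
  define v where "v i = (\<Sum>t\<in>T. A i t * qs t)" for i
  define w where "w i = ng (v i)" for i
  have w0: "0 \<le> w i" for i by (simp add: w_def ng_def)
  have fqs: "f qs = (\<Sum>i\<in>I. (w i)\<^sup>2)" by (simp add: f_def w_def v_def)
  show ?thesis
  proof (cases "f qs = 0")
    case True
    then have "\<forall>i\<in>I. (w i)\<^sup>2 = 0" using fqs I by (simp add: sum_nonneg_eq_0_iff)
    then have "\<forall>i\<in>I. 0 \<le> v i" by (force simp: w_def ng_def max_def split: if_splits)
    then show ?thesis using qs by (auto simp: v_def)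
  next
    case False
    have "f qs \<ge> 0" by (simp add: fqs sum_nonneg)
    with False have dpos: "f qs > 0" by simp
    have "\<forall>t1\<in>T. (\<Sum>i\<in>I. w i * A i t1) < 0"
    proof
      fix t1 assume t1: "t1 \<in> T"
      define e where "e t = (if t = t1 then 1 else (0::real))" for t
      define d where "d i = A i t1 - v i" for i
      have key: "2 * \<tau> * (\<Sum>i\<in>I. w i * d i) \<le> \<tau>\<^sup>2 * (\<Sum>i\<in>I. (d i)\<^sup>2)"
        if tau: "0 < \<tau>" "\<tau> \<le> 1" for \<tau>
      proof -
        define q where "q t = qs t + \<tau> * (e t - qs t)" for t
        have qst: "\<forall>t\<in>T. 0 \<le> qs t" "\<forall>t. t \<notin> T \<longrightarrow> qs t = 0" "sum qs T = 1"
          using qs by (auto simp: smplx_def)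
        have "q t = (1 - \<tau>) * qs t + \<tau> * e t" for t by (simp add: q_def algebra_simps)
        then have "q \<in> smplx T"
          using qst tau t1 T(1) unfolding smplx_def
          by (auto simp: e_def sum.distrib sum_distrib_left[symmetric] intro!: add_nonneg_nonneg)
        then have le: "f qs \<le> f q" by (rule qmin)
        have sA: "(\<Sum>t\<in>T. A i t * q t) = v i + \<tau> * d i" for i
        proof -
          have "(\<Sum>t\<in>T. A i t * q t) = (\<Sum>t\<in>T. A i t * qs t) + \<tau> * ((\<Sum>t\<in>T. A i t * e t) - (\<Sum>t\<in>T. A i t * qs t))"
            by (simp add: q_def algebra_simps sum.distrib sum_distrib_left sum_subtractf)
          also have "(\<Sum>t\<in>T. A i t * e t) = A i t1"
          proof -
            have "(\<Sum>t\<in>T. A i t * e t) = (\<Sum>t\<in>T. if t = t1 then A i t1 else 0)"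
              by (rule sum.cong) (auto simp: e_def)
            then show ?thesis using t1 T(1) by (simp add: sum.delta)
          qed
          finally show ?thesis by (simp add: v_def d_def)
        qed
        have "f q = (\<Sum>i\<in>I. (ng (v i + \<tau> * d i))\<^sup>2)" by (simp add: f_def sA)
        also have "\<dots> \<le> (\<Sum>i\<in>I. (w i - \<tau> * d i)\<^sup>2)"
          by (intro sum_mono) (simp add: w_def ng_sq_le)
        also have "\<dots> = (\<Sum>i\<in>I. (w i)\<^sup>2) - 2 * \<tau> * (\<Sum>i\<in>I. w i * d i) + \<tau>\<^sup>2 * (\<Sum>i\<in>I. (d i)\<^sup>2)"
          by (simp add: power2_diff sum.distrib sum_subtractf sum_distrib_left algebra_simps power_mult_distrib)
        finally show ?thesis using le fqs by simp
      qed
      have "(\<Sum>i\<in>I. w i * d i) \<le> 0"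
        by (rule small_tau) (rule key)
      moreover have "(\<Sum>i\<in>I. w i * d i) = (\<Sum>i\<in>I. w i * A i t1) + f qs"
        by (simp add: d_def fqs right_diff_distrib sum_subtractf w_def ng_mult sum.distrib)
      ultimately show "(\<Sum>i\<in>I. w i * A i t1) < 0" using dpos by simp
    qed
    then show ?thesis using w0 by blast
  qed
qed


lemma finite_argmax:
  fixes z :: "'t \<Rightarrow> real"
  assumes "finite T" "T \<noteq> {}"
  obtains t where "t \<in> T" "\<And>b. b \<in> T \<Longrightarrow> z b \<le> z t"
proof -
  have "Max (z ` T) \<in> z ` T" using assms by simp
  then obtain t where "t \<in> T" "z t = Max (z ` T)" by auto
  moreover have "z b \<le> Max (z ` T)" if "b \<in> T" for b using assms that by simp
  ultimately show ?thesis using that by metis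
qed

lemma stationary:
  fixes T :: "'t set" and w :: "'t \<Rightarrow> 't \<Rightarrow> real"
  assumes T: "finite T" "T \<noteq> {}" and w: "\<And>a b. a \<in> T \<Longrightarrow> b \<in> T \<Longrightarrow> 0 \<le> w a b"
  shows "\<exists>q\<in>smplx T. \<forall>b\<in>T. q b * (\<Sum>a\<in>T. w b a) = (\<Sum>a\<in>T. q a * w a b)"
proof -
  define W where "W a = (\<Sum>c\<in>T. w a c)" for a
  define M where "M b a = w a b - (if a = b then W a else 0)" for b a
  have Mq: "(\<Sum>a\<in>T. M b a * q a) = (\<Sum>a\<in>T. q a * w a b) - q b * W b" if "b \<in> T" for b q
  proof -
    have "(\<Sum>a\<in>T. M b a * q a) = (\<Sum>a\<in>T. q a * w a b - (if a = b then W b * q b else 0))"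
      by (rule sum.cong) (auto simp: M_def algebra_simps)
    also have "\<dots> = (\<Sum>a\<in>T. q a * w a b) - (\<Sum>a\<in>T. if a = b then W b * q b else 0)"
      by (rule sum_subtractf)
    also have "(\<Sum>a\<in>T. if a = b then W b * q b else 0) = W b * q b"
      using that T(1) by (simp add: sum.delta)
    finally show ?thesis by simp
  qed
  define A where "A = (\<lambda>(b, s::bool) a. if s then M b a else - M b a)"
  have fin: "finite (T \<times> (UNIV :: bool set))" using T by simp
  from ville[OF T fin, of A] show ?thesis
  proof
    assume "\<exists>q\<in>smplx T. \<forall>i\<in>T \<times> UNIV. 0 \<le> (\<Sum>t\<in>T. A i t * q t)"
    then obtain q where q: "q \<in> smplx T" and h: "\<forall>i\<in>T \<times> UNIV. 0 \<le> (\<Sum>t\<in>T. A i t * q t)" by blast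
    have "(\<Sum>a\<in>T. M b a * q a) = 0" if "b \<in> T" for b
    proof -
      have "0 \<le> (\<Sum>t\<in>T. A (b, True) t * q t)" using h that by blast
      moreover have "0 \<le> (\<Sum>t\<in>T. A (b, False) t * q t)" using h that by blast
      ultimately show ?thesis by (simp add: A_def sum_negf)
    qed
    then have "\<forall>b\<in>T. q b * (\<Sum>a\<in>T. w b a) = (\<Sum>a\<in>T. q a * w a b)" using Mq by (simp add: W_def)
    then show ?thesis using q by blast
  next
    assume "\<exists>w'. (\<forall>i\<in>T \<times> UNIV. 0 \<le> w' i) \<and> (\<forall>t\<in>T. (\<Sum>i\<in>T \<times> UNIV. w' i * A i t) < 0)"
    then obtain w' where h: "\<forall>t\<in>T. (\<Sum>i\<in>T \<times> UNIV. w' i * A i t) < 0" by blast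
    define z where "z b = w' (b, False) - w' (b, True)" for b
    have pos: "0 < (\<Sum>b\<in>T. z b * M b t)" if "t \<in> T" for t
    proof -
      have "(\<Sum>i\<in>T \<times> UNIV. w' i * A i t) = (\<Sum>b\<in>T. \<Sum>s\<in>UNIV. w' (b, s) * A (b, s) t)"
        by (simp add: sum.cartesian_product)
      also have "\<dots> = - (\<Sum>b\<in>T. z b * M b t)" (is "_ = ?r")
        by (simp add: UNIV_bool A_def z_def algebra_simps sum_negf sum_subtractf)
      moreover have "(\<Sum>i\<in>T \<times> UNIV. w' i * A i t) < 0" using h that by blast
      ultimately show ?thesis by linarith
    qed
    obtain t where t: "t \<in> T" and tmax: "\<And>b. b \<in> T \<Longrightarrow> z b \<le> z t"
      using finite_argmax[OF T, of z] by blast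
    have "(\<Sum>b\<in>T. z b * M b t) = (\<Sum>b\<in>T. w t b * (z b - z t))"
    proof -
      have "(\<Sum>b\<in>T. z b * M b t) = (\<Sum>b\<in>T. z b * w t b - (if b = t then z t * W t else 0))"
        by (rule sum.cong) (auto simp: M_def algebra_simps)
      also have "\<dots> = (\<Sum>b\<in>T. z b * w t b) - (\<Sum>b\<in>T. if b = t then z t * W t else 0)"
        by (rule sum_subtractf)
      also have "(\<Sum>b\<in>T. if b = t then z t * W t else 0) = z t * W t"
        using t T(1) by (simp add: sum.delta)
      finally show ?thesis
        by (simp add: W_def right_diff_distrib sum_subtractf sum_distrib_left algebra_simps)
    qed
    also have "\<dots> \<le> 0"
      by (intro sum_nonpos mult_nonneg_nonpos) (auto simp: w t tmax)
    finally show ?thesis using pos[OF t] by simp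
  qed
qed


lemma upd_PiE: "s \<in> PiE N S \<Longrightarrow> p \<in> N \<Longrightarrow> b \<in> S p \<Longrightarrow> s(p := b) \<in> PiE N S"
  by (auto simp: PiE_iff extensional_def)

lemma reindex_upd:
  fixes g :: "('p \<Rightarrow> 's) \<Rightarrow> real"
  assumes p: "p \<in> N" and a: "a \<in> S p" and b: "b \<in> S p"
  shows "(\<Sum>s\<in>{s\<in>PiE N S. s p = a}. g (s(p := b))) = (\<Sum>t\<in>{t\<in>PiE N S. t p = b}. g t)"
proof -
  have "bij_betw (\<lambda>s. s(p := b)) {s\<in>PiE N S. s p = a} {t\<in>PiE N S. t p = b}"
    by (rule bij_betw_byWitness[where f' = "\<lambda>t. t(p := a)"])
       (auto simp: upd_PiE p a b)
  then show ?thesis by (rule sum.reindex_bij_betw)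
qed

lemma CE_exists:
  fixes N :: "'p set" and S :: "'p \<Rightarrow> 's set" and u :: "'p \<Rightarrow> ('p \<Rightarrow> 's) \<Rightarrow> real"
  assumes G: "finite_game N S"
  shows "CE_set N S u N \<noteq> {}"
proof -
  have finN: "finite N" and finS: "\<And>p. p \<in> N \<Longrightarrow> finite (S p)" and neS: "\<And>p. p \<in> N \<Longrightarrow> S p \<noteq> {}"
    using G by (auto simp: finite_game_def)
  define Prof where "Prof = PiE N S"
  have finP: "finite Prof" unfolding Prof_def using finN finS by (simp add: finite_PiE)
  have neP: "Prof \<noteq> {}" unfolding Prof_def using neS by (simp add: PiE_eq_empty_iff)
  define I where "I = Sigma N (\<lambda>p. S p \<times> S p)"
  have finI: "finite I" unfolding I_def using finN finS by (auto intro!: finite_SigmaI)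
  define A where "A = (\<lambda>(p, a, b) s. if s p = a then u p s - u p (s(p := b)) else 0)"
  have distr: "distributions N S = smplx Prof"
    by (simp add: distributions_def smplx_def profiles_def Prof_def)
  from ville[OF finP neP finI, of A] show ?thesis
  proof
    assume "\<exists>q\<in>smplx Prof. \<forall>i\<in>I. 0 \<le> (\<Sum>t\<in>Prof. A i t * q t)"
    then obtain q where q: "q \<in> smplx Prof" and h: "\<forall>i\<in>I. 0 \<le> (\<Sum>t\<in>Prof. A i t * q t)" by blast
    have "q \<in> CE_set N S u N"
      unfolding CE_set_def
    proof (intro CollectI conjI ballI impI)
      show "q \<in> distributions N S" using q distr by simp
      fix p a b assume p: "p \<in> N" and a: "a \<in> S p" and b: "b \<in> S p" and "a \<noteq> b"
      have "0 \<le> (\<Sum>t\<in>Prof. A (p, a, b) t * q t)" using h p a b by (auto simp: I_def)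
      also have "(\<Sum>t\<in>Prof. A (p, a, b) t * q t) = (\<Sum>t\<in>Prof. if t p = a then q t * (u p t - u p (t(p := b))) else 0)"
        by (rule sum.cong) (auto simp: A_def)
      also have "\<dots> = (\<Sum>s\<in>{s\<in>profiles N S. s p = a}. q s * (u p s - u p (s(p := b))))"
        using sum.inter_filter[OF finP, of "\<lambda>s. q s * (u p s - u p (s(p := b)))" "\<lambda>s. s p = a"]
        by (simp add: Prof_def profiles_def)
      finally show "0 \<le> (\<Sum>s\<in>{s\<in>profiles N S. s p = a}. q s * (u p s - u p (s(p := b))))" .
    qed
    then show ?thesis by blast
  next
    assume "\<exists>w. (\<forall>i\<in>I. 0 \<le> w i) \<and> (\<forall>t\<in>Prof. (\<Sum>i\<in>I. w i * A i t) < 0)"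
    then obtain w where w0: "\<forall>i\<in>I. 0 \<le> w i" and wneg: "\<forall>t\<in>Prof. (\<Sum>i\<in>I. w i * A i t) < 0" by blast
    have "\<forall>p\<in>N. \<exists>q\<in>smplx (S p). \<forall>b\<in>S p. q b * (\<Sum>a\<in>S p. w (p, b, a)) = (\<Sum>a\<in>S p. q a * w (p, a, b))"
    proof
      fix p assume p: "p \<in> N"
      show "\<exists>q\<in>smplx (S p). \<forall>b\<in>S p. q b * (\<Sum>a\<in>S p. w (p, b, a)) = (\<Sum>a\<in>S p. q a * w (p, a, b))"
        by (rule stationary[OF finS[OF p] neS[OF p], of "\<lambda>a b. w (p, a, b)"])
           (use w0 p in \<open>auto simp: I_def\<close>)
    qed
    then obtain qq where qqall: "\<forall>p\<in>N. qq p \<in> smplx (S p) \<and> (\<forall>b\<in>S p. qq p b * (\<Sum>a\<in>S p. w (p, b, a)) = (\<Sum>a\<in>S p. qq p a * w (p, a, b)))"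
      using bchoice[of N "\<lambda>p q. q \<in> smplx (S p) \<and> (\<forall>b\<in>S p. q b * (\<Sum>a\<in>S p. w (p, b, a)) = (\<Sum>a\<in>S p. q a * w (p, a, b)))"] by blast
    then have qq: "\<And>p. p \<in> N \<Longrightarrow> qq p \<in> smplx (S p)"
      and stat: "\<And>p b. p \<in> N \<Longrightarrow> b \<in> S p \<Longrightarrow> qq p b * (\<Sum>a\<in>S p. w (p, b, a)) = (\<Sum>a\<in>S p. qq p a * w (p, a, b))"
      by blast+
    have qq0: "0 \<le> qq p a" if "p \<in> N" "a \<in> S p" for p a using qq[OF that(1)] that(2) by (simp add: smplx_def)
    define Q where "Q s = (\<Prod>r\<in>N. qq r (s r))" for s
    have Q0: "0 \<le> Q s" if "s \<in> Prof" for s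
      using that unfolding Q_def Prof_def by (auto intro!: prod_nonneg qq0 simp: PiE_iff)
    have "\<forall>r\<in>N. \<exists>a\<in>S r. 0 < qq r a"
    proof
      fix r assume r: "r \<in> N"
      show "\<exists>a\<in>S r. 0 < qq r a"
      proof (rule ccontr)
        assume "\<not> ?thesis"
        then have "\<forall>a\<in>S r. qq r a = 0" using qq0[OF r] by force
        then have "sum (qq r) (S r) = 0" by simp
        then show False using qq[OF r] by (simp add: smplx_def)
      qed
    qed
    then obtain c where c0: "\<forall>r\<in>N. c r \<in> S r \<and> 0 < qq r (c r)" using bchoice[of N "\<lambda>r a. a \<in> S r \<and> 0 < qq r a"] by blast
    then have c: "\<And>r. r \<in> N \<Longrightarrow> c r \<in> S r \<and> 0 < qq r (c r)" by blast
    define s0 where "s0 = restrict c N"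
    have s0P: "s0 \<in> Prof" using c by (auto simp: s0_def Prof_def)
    have Qs0: "0 < Q s0" unfolding Q_def s0_def using c by (auto intro!: prod_pos)
    have neg: "(\<Sum>s\<in>Prof. Q s * (\<Sum>i\<in>I. w i * A i s)) < 0"
    proof -
      have "(\<Sum>s\<in>Prof. Q s * (\<Sum>i\<in>I. w i * A i s)) = Q s0 * (\<Sum>i\<in>I. w i * A i s0) + (\<Sum>s\<in>Prof - {s0}. Q s * (\<Sum>i\<in>I. w i * A i s))"
        by (rule sum.remove[OF finP s0P])
      moreover have "Q s0 * (\<Sum>i\<in>I. w i * A i s0) < 0"
        using Qs0 wneg s0P by (simp add: mult_pos_neg)
      moreover have "(\<Sum>s\<in>Prof - {s0}. Q s * (\<Sum>i\<in>I. w i * A i s)) \<le> 0"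
      proof (rule sum_nonpos)
        fix s assume "s \<in> Prof - {s0}"
        then have "0 \<le> Q s" "(\<Sum>i\<in>I. w i * A i s) \<le> 0" using Q0 wneg by (auto intro: less_imp_le)
        then show "Q s * (\<Sum>i\<in>I. w i * A i s) \<le> 0" by (rule mult_nonneg_nonpos)
      qed
      ultimately show ?thesis by linarith
    qed
    have blk: "(\<Sum>ab\<in>S p \<times> S p. w (p, ab) * (\<Sum>s\<in>Prof. Q s * A (p, ab) s)) = 0" if p: "p \<in> N" for p
    proof -
      define R where "R s = (\<Prod>r\<in>N - {p}. qq r (s r))" for s
      have QR: "Q s = qq p (s p) * R s" for s unfolding Q_def R_def by (rule prod.remove[OF finN p])
      have Rupd: "R (s(p := b)) = R s" for s b unfolding R_def by (rule prod.cong) auto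
      define H where "H c = (\<Sum>t\<in>{t\<in>Prof. t p = c}. R t * u p t)" for c
      have inner: "(\<Sum>s\<in>Prof. Q s * A (p, a, b) s) = qq p a * (H a - H b)" if a: "a \<in> S p" and b: "b \<in> S p" for a b
      proof -
        have "(\<Sum>s\<in>Prof. Q s * A (p, a, b) s) = (\<Sum>s\<in>Prof. if s p = a then Q s * (u p s - u p (s(p := b))) else 0)"
          by (rule sum.cong) (auto simp: A_def)
        also have "\<dots> = (\<Sum>s\<in>{s\<in>Prof. s p = a}. Q s * (u p s - u p (s(p := b))))"
          by (simp add: sum.inter_filter[OF finP])
        also have "\<dots> = (\<Sum>s\<in>{s\<in>Prof. s p = a}. qq p a * (R s * u p s) - qq p a * (R (s(p := b)) * u p (s(p := b))))"
          by (rule sum.cong) (auto simp: QR Rupd algebra_simps)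
        also have "\<dots> = qq p a * (\<Sum>s\<in>{s\<in>Prof. s p = a}. R s * u p s) - qq p a * (\<Sum>s\<in>{s\<in>Prof. s p = a}. R (s(p := b)) * u p (s(p := b)))"
          by (simp add: sum_subtractf sum_distrib_left)
        also have "(\<Sum>s\<in>{s\<in>Prof. s p = a}. R (s(p := b)) * u p (s(p := b))) = H b"
          unfolding H_def Prof_def by (rule reindex_upd[where N=N and S=S, OF p a b])
        finally show ?thesis by (simp add: H_def right_diff_distrib)
      qed
      have "(\<Sum>ab\<in>S p \<times> S p. w (p, ab) * (\<Sum>s\<in>Prof. Q s * A (p, ab) s))
          = (\<Sum>(a, b)\<in>S p \<times> S p. w (p, a, b) * (\<Sum>s\<in>Prof. Q s * A (p, a, b) s))"
        by (rule sum.cong) auto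
      also have "\<dots> = (\<Sum>a\<in>S p. \<Sum>b\<in>S p. w (p, a, b) * (\<Sum>s\<in>Prof. Q s * A (p, a, b) s))"
        by (rule sum.cartesian_product[symmetric])
      also have "\<dots> = (\<Sum>a\<in>S p. \<Sum>b\<in>S p. w (p, a, b) * (qq p a * (H a - H b)))"
        by (intro sum.cong refl) (simp add: inner)
      also have "\<dots> = (\<Sum>a\<in>S p. \<Sum>b\<in>S p. H a * (qq p a * w (p, a, b))) - (\<Sum>a\<in>S p. \<Sum>b\<in>S p. H b * (qq p a * w (p, a, b)))"
        by (simp add: sum_subtractf algebra_simps)
      also have "(\<Sum>a\<in>S p. \<Sum>b\<in>S p. H b * (qq p a * w (p, a, b))) = (\<Sum>b\<in>S p. H b * (\<Sum>a\<in>S p. qq p a * w (p, a, b)))"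
        by (subst sum.swap) (simp add: sum_distrib_left)
      also have "\<dots> = (\<Sum>b\<in>S p. H b * (qq p b * (\<Sum>a\<in>S p. w (p, b, a))))"
        by (rule sum.cong) (auto simp: stat[OF p])
      also have "(\<Sum>a\<in>S p. \<Sum>b\<in>S p. H a * (qq p a * w (p, a, b))) = (\<Sum>a\<in>S p. H a * (qq p a * (\<Sum>b\<in>S p. w (p, a, b))))"
        by (simp add: sum_distrib_left)
      finally show ?thesis by simp
    qed
    have "(\<Sum>s\<in>Prof. Q s * (\<Sum>i\<in>I. w i * A i s)) = (\<Sum>i\<in>I. w i * (\<Sum>s\<in>Prof. Q s * A i s))"
      by (simp add: sum_distrib_left sum.swap[of _ Prof] algebra_simps)
    also have "\<dots> = (\<Sum>(p, ab)\<in>Sigma N (\<lambda>p. S p \<times> S p). w (p, ab) * (\<Sum>s\<in>Prof. Q s * A (p, ab) s))"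
      unfolding I_def by (rule sum.cong) auto
    also have "\<dots> = (\<Sum>p\<in>N. \<Sum>ab\<in>S p \<times> S p. w (p, ab) * (\<Sum>s\<in>Prof. Q s * A (p, ab) s))"
      by (rule sum.Sigma[symmetric]) (use finN finS in auto)
    also have "\<dots> = 0" by (simp add: blk)
    finally show ?thesis using neg by simp
  qed
qed


lemma cont_coord2: "continuous_on UNIV (\<lambda>x. x i j :: 'b::topological_space)"
  by (rule continuous_on_product_then_coordinatewise[OF continuous_on_product_coordinates])

lemma compact_CE:
  assumes G: "finite_game N S"
  shows "compact (CE_set N S u P)"
proof -
  have finN: "finite N" and finS: "\<And>p. p \<in> N \<Longrightarrow> finite (S p)"
    using G by (auto simp: finite_game_def)
  define Prof where "Prof = PiE N S"
  have finP: "finite Prof" unfolding Prof_def using finN finS by (simp add: finite_PiE)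
  define J where "J = {(p, a, b). p \<in> P \<and> a \<in> S p \<and> b \<in> S p \<and> a \<noteq> b}"
  define g where "g = (\<lambda>(p, a, b) x. (\<Sum>s\<in>{s\<in>Prof. s p = a}. x s * (u p s - u p (s(p := b)))))"
  have "CE_set N S u P = smplx Prof \<inter> {x. \<forall>i\<in>J. 0 \<le> g i x}"
    by (auto simp: CE_set_def distributions_def smplx_def Prof_def profiles_def J_def g_def)
  moreover have "compact (smplx Prof)" by (rule compact_smplx[OF finP])
  moreover have "closed {x. \<forall>i\<in>J. 0 \<le> g i x}"
  proof (rule closed_ball_cond)
    fix i show "continuous_on UNIV (g i)"
      unfolding g_def by (cases i) (auto intro!: continuous_intros)
  qed
  ultimately show ?thesis by (simp add: compact_Int_closed)
qed

lemma compact_SGX: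
  assumes G: "finite_game N S"
  shows "compact (SG_X N S u L F)"
proof -
  define K where "K \<pi> = (if \<pi> \<in> ordered_subsets L then CE_set N S u (set \<pi> \<union> F) else {undefined})" for \<pi>
  have "SG_X N S u L F = {x. \<forall>\<pi>. x \<pi> \<in> K \<pi>}"
    by (auto simp: SG_X_def K_def PiE_def Pi_def extensional_def)
  moreover have "compact {x. \<forall>\<pi>. x \<pi> \<in> K \<pi>}"
    by (rule compact_box) (auto simp: K_def compact_CE[OF G])
  ultimately show ?thesis by simp
qed

lemma closed_stable: "closed {x. stable_at N S u L x \<pi>}"
proof -
  have "{x. stable_at N S u L x \<pi>} = {x. \<forall>p\<in>L - set \<pi>. 0 \<le> exp_util N S u p (x \<pi>) - exp_util N S u p (x (\<pi> @ [p]))}"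
    by (auto simp: stable_at_def)
  moreover have "closed \<dots>"
    by (rule closed_ball_cond) (auto simp: exp_util_def intro!: continuous_intros cont_coord2)
  ultimately show ?thesis by simp
qed

lemma pareto_exists:
  fixes K :: "('p list \<Rightarrow> (('p \<Rightarrow> 's) \<Rightarrow> real)) set"
  assumes "compact K" "K \<noteq> {}" "finite L"
  shows "\<exists>x\<in>K. x [] \<in> pareto N S u L [] K"
proof -
  define phi where "phi x = (\<Sum>p\<in>L. exp_util N S u p (x []))" for x :: "'p list \<Rightarrow> (('p \<Rightarrow> 's) \<Rightarrow> real)"
  have "continuous_on UNIV phi"
    unfolding phi_def exp_util_def by (auto intro!: continuous_intros cont_coord2)
  then obtain xs where xs: "xs \<in> K" and mx: "\<And>y. y \<in> K \<Longrightarrow> phi y \<le> phi xs"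
    using continuous_attains_sup[OF assms(1,2) continuous_on_subset] by blast
  have "xs [] \<in> pareto N S u L [] K"
    unfolding pareto_def
  proof (intro CollectI conjI notI)
    show "xs [] \<in> (\<lambda>x'. x' []) ` K" using xs by blast
    assume "\<exists>y'\<in>(\<lambda>x'. x' []) ` K. (\<forall>p\<in>L - set []. exp_util N S u p (xs []) \<le> exp_util N S u p y') \<and>
        (\<exists>p\<in>L - set []. exp_util N S u p (xs []) < exp_util N S u p y')"
    then obtain x' where x': "x' \<in> K" and ge: "\<forall>p\<in>L. exp_util N S u p (xs []) \<le> exp_util N S u p (x' [])"
      and gt: "\<exists>p\<in>L. exp_util N S u p (xs []) < exp_util N S u p (x' [])" by auto
    have "phi xs < phi x'" unfolding phi_def
      by (rule sum_strict_mono_ex1[OF assms(3)]) (use ge gt in auto)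
    with mx[OF x'] show False by simp
  qed
  with xs show ?thesis by blast
qed

theorem theorem1:
  fixes N :: "'p set" and S :: "'p \<Rightarrow> 's set" and u :: "'p \<Rightarrow> ('p \<Rightarrow> 's) \<Rightarrow> real"
    and L F :: "'p set"
  assumes "finite_game N S"
    and "L \<union> F = N" and "L \<inter> F = {}"
  shows "SCE_set N S u L F \<noteq> {} \<and> SCE_PA_set N S u L F \<noteq> {}"
proof -
  have G: "finite_game N S" by fact
  have finL: "finite L" using assms(1,2) by (auto simp: finite_game_def intro: finite_subset)
  obtain y where y: "y \<in> CE_set N S u N" using CE_exists[OF G] by blast
  define x0 where "x0 = restrict (\<lambda>_. y) (ordered_subsets L)"
  have x0X: "x0 \<in> SG_X N S u L F"
  proof -
    have "y \<in> CE_set N S u (set \<pi> \<union> F)" if "\<pi> \<in> ordered_subsets L" for \<pi>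
      using y that assms(2) by (auto simp: CE_set_def ordered_subsets_def)
    then show ?thesis by (auto simp: SG_X_def x0_def)
  qed
  have x0st: "stable_at N S u L x0 \<pi>" if "\<pi> \<in> ordered_subsets L" for \<pi>
  proof -
    have "\<pi> @ [p] \<in> ordered_subsets L" if "p \<in> L - set \<pi>" for p
      using that \<open>\<pi> \<in> ordered_subsets L\<close> by (auto simp: ordered_subsets_def)
    then show ?thesis using that by (auto simp: stable_at_def x0_def)
  qed
  have emp: "[] \<in> ordered_subsets L" by (simp add: ordered_subsets_def)
  have XS_eq: "SG_XS N S u L F = SG_X N S u L F \<inter> {x. stable_at N S u L x []}"
    by (auto simp: SG_XS_def)
  have XPS_eq: "SG_XPS N S u L F = SG_X N S u L F \<inter> (\<Inter>\<pi>\<in>ordered_subsets L. {x. stable_at N S u L x \<pi>})"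
    by (auto simp: SG_XPS_def)
  have cXS: "compact (SG_XS N S u L F)"
    unfolding XS_eq by (rule compact_Int_closed[OF compact_SGX[OF G] closed_stable])
  have cXPS: "compact (SG_XPS N S u L F)"
    unfolding XPS_eq by (rule compact_Int_closed[OF compact_SGX[OF G]]) (auto intro!: closed_INT closed_stable)
  have neXS: "SG_XS N S u L F \<noteq> {}" using x0X x0st[OF emp] by (auto simp: SG_XS_def)
  have neXPS: "SG_XPS N S u L F \<noteq> {}" using x0X x0st by (auto simp: SG_XPS_def)
  obtain x1 where "x1 \<in> SG_XS N S u L F" "x1 [] \<in> pareto N S u L [] (SG_XS N S u L F)"
    using pareto_exists[OF cXS neXS finL] by blast
  then have "x1 \<in> SCE_set N S u L F" by (simp add: SCE_set_def)
  moreover obtain x2 where "x2 \<in> SG_XPS N S u L F" "x2 [] \<in> pareto N S u L [] (SG_XPS N S u L F)"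
    using pareto_exists[OF cXPS neXPS finL] by blast
  then have "x2 \<in> SCE_PA_set N S u L F" by (simp add: SCE_PA_set_def)
  ultimately show ?thesis by blast
qed

end
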